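(* Let $G$ be a finite non-abelian group satisfying condition (Con). Then the bipartition width of $\mathcal C_G$ satisfies $$bw(\mathcal C_G)\ge \begin{cases}\frac{|G|\,|Z(G)|}{4}, & |G| \text{ even},\\ \frac{(|G|^2-1)|Z(G)|}{4|G|}, & |G| \text{ odd}.\end{cases}$$
   Context: For a finite group $G$, the commuting graph $\mathcal C_G$ is the simple undirected graph with vertex set $G$ in which distinct $u,v\in G$ are adjacent iff $uv=vu$. $Z(G)$ is the center of $G$ and $C(v)=\{w\in G: wv=vw\}$ the centralizer of $v$. Condition (Con): for all $u,v\in G\setminus Z(G)$, either $C(u)=C(v)$ or $C(u)\cap C(v)=Z(G)$. For a vertex subset $S$, $\partial S$ is the set of edges with one endpoint in $S$ and one outside $S$. The bipartition width of a graph on vertex set $V$ is $bw=\min\{|\partial S|: S\subset V,\ |S|=\lfloor |V|/2\rfloor\}$. *)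

theory Defs
  imports Complex_Main "HOL-Algebra.Group"
begin

definition grp_center :: "('a, 'b) monoid_scheme \<Rightarrow> 'a set" where
  "grp_center G = {z \<in> carrier G. \<forall>w \<in> carrier G. z \<otimes>\<^bsub>G\<^esub> w = w \<otimes>\<^bsub>G\<^esub> z}"

definition grp_centralizer :: "('a, 'b) monoid_scheme \<Rightarrow> 'a \<Rightarrow> 'a set" where
  "grp_centralizer G v = {w \<in> carrier G. w \<otimes>\<^bsub>G\<^esub> v = v \<otimes>\<^bsub>G\<^esub> w}"

definition con_condition :: "('a, 'b) monoid_scheme \<Rightarrow> bool" where
  "con_condition G \<longleftrightarrow>
     (\<forall>u \<in> carrier G - grp_center G. \<forall>v \<in> carrier G - grp_center G.
        grp_centralizer G u = grp_centralizer G v \<or>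
        grp_centralizer G u \<inter> grp_centralizer G v = grp_center G)"

definition commuting_edges :: "('a, 'b) monoid_scheme \<Rightarrow> 'a set set" where
  "commuting_edges G = {{u, v} | u v. u \<in> carrier G \<and> v \<in> carrier G \<and> u \<noteq> v \<and>
                                       u \<otimes>\<^bsub>G\<^esub> v = v \<otimes>\<^bsub>G\<^esub> u}"

definition comm_boundary :: "('a, 'b) monoid_scheme \<Rightarrow> 'a set \<Rightarrow> 'a set set" where
  "comm_boundary G S = {e \<in> commuting_edges G. card (e \<inter> S) = 1}"

definition comm_bw :: "('a, 'b) monoid_scheme \<Rightarrow> nat" where
  "comm_bw G = Min {card (comm_boundary G S) | S. S \<subset> carrier G \<and> card S = card (carrier G) div 2}"

end

theory Submission
  imports Defs
begin

lemma center_half: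
  fixes G (structure)
  assumes "group G" and "finite (carrier G)" and "\<not> comm_group G"
  shows "2 * card (grp_center G) \<le> card (carrier G)"
proof -
  interpret group G by fact
  let ?Z = "grp_center G"
  have Zsub: "?Z \<subseteq> carrier G" unfolding grp_center_def by auto
  obtain g where g: "g \<in> carrier G" "g \<notin> ?Z"
  proof -
    have "\<not> (\<forall>x\<in>carrier G. \<forall>y\<in>carrier G. x \<otimes> y = y \<otimes> x)"
      using assms(3) group_comm_groupI by blast
    then obtain x where "x \<in> carrier G" "x \<notin> ?Z" unfolding grp_center_def by auto
    then show ?thesis using that by blast
  qed
  have img: "(\<lambda>z. g \<otimes> z) ` ?Z \<subseteq> carrier G - ?Z"
  proof
    fix y assume "y \<in> (\<lambda>z. g \<otimes> z) ` ?Z"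
    then obtain z where z: "z \<in> ?Z" "y = g \<otimes> z" by auto
    have zc: "z \<in> carrier G" and zcomm: "\<And>w. w \<in> carrier G \<Longrightarrow> z \<otimes> w = w \<otimes> z"
      using z(1) unfolding grp_center_def by auto
    have "y \<notin> ?Z"
    proof
      assume yZ: "y \<in> ?Z"
      have "g \<in> ?Z" unfolding grp_center_def
      proof (intro CollectI conjI ballI)
        show "g \<in> carrier G" by fact
        fix w assume w: "w \<in> carrier G"
        have "(g \<otimes> z) \<otimes> w = w \<otimes> (g \<otimes> z)"
          using yZ w z(2) unfolding grp_center_def by auto
        hence "(g \<otimes> w) \<otimes> z = (w \<otimes> g) \<otimes> z"
          using w g zc zcomm[OF w] by (simp add: m_assoc)
        thus "g \<otimes> w = w \<otimes> g" using w g zc by simp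
      qed
      with g show False by simp
    qed
    thus "y \<in> carrier G - ?Z" using z g zc by auto
  qed
  have inj: "inj_on (\<lambda>z. g \<otimes> z) ?Z"
    proof (rule inj_onI)
    fix x y assume xy: "x \<in> ?Z" "y \<in> ?Z" "g \<otimes> x = g \<otimes> y"
    have xc: "x \<in> carrier G" "y \<in> carrier G" using xy Zsub by auto
    have "inv g \<otimes> (g \<otimes> x) = inv g \<otimes> (g \<otimes> y)" using xy by simp
    thus "x = y" using xc g(1) by (simp add: m_assoc[symmetric])
  qed
  have "card ?Z \<le> card (carrier G - ?Z)"
    using card_inj_on_le[OF inj img] assms(2) by auto
  moreover have "card (carrier G - ?Z) = card (carrier G) - card ?Z"
    using Zsub assms(2) by (simp add: card_Diff_subset finite_subset)
  moreover have "card ?Z \<le> card (carrier G)" using Zsub assms(2) card_mono by blast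
  ultimately show ?thesis by linarith
qed

lemma boundary_bound:
  fixes G (structure)
  assumes "group G" and fin: "finite (carrier G)" and SC: "S \<subseteq> carrier G"
  shows "card (grp_center G \<inter> S) * (card (carrier G) - card S)
       + card (grp_center G - S) * (card S - card (grp_center G \<inter> S))
       \<le> card (comm_boundary G S)"
proof -
  let ?Z = "grp_center G"
  have Zsub: "?Z \<subseteq> carrier G" unfolding grp_center_def by auto
  define D1 where "D1 = (?Z \<inter> S) \<times> (carrier G - S)"
  define D2 where "D2 = (?Z - S) \<times> (S - ?Z)"
  have finS: "finite S" using SC fin finite_subset by blast
  have finZ: "finite ?Z" using Zsub fin finite_subset by blast
  have cD1: "card D1 = card (?Z \<inter> S) * (card (carrier G) - card S)"
    unfolding D1_def card_cartesian_product using SC fin by (simp add: card_Diff_subset finS)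
  have cD2: "card D2 = card (?Z - S) * (card S - card (?Z \<inter> S))"
  proof -
    have "S - ?Z = S - (?Z \<inter> S)" by auto
    hence "card (S - ?Z) = card S - card (?Z \<inter> S)" using finS by (simp add: card_Diff_subset)
    thus ?thesis unfolding D2_def card_cartesian_product by simp
  qed
  have disj: "D1 \<inter> D2 = {}" unfolding D1_def D2_def by auto
  have finD: "finite D1" "finite D2" unfolding D1_def D2_def using finS finZ fin by auto
  have cD: "card (D1 \<union> D2) = card D1 + card D2" using card_Un_disjoint[OF finD disj] .
  define f where "f = (\<lambda>(z::'a, v). {z, v})"
  have inj: "inj_on f (D1 \<union> D2)"
  proof (rule inj_onI)
    fix p q assume p: "p \<in> D1 \<union> D2" and q: "q \<in> D1 \<union> D2" and eq: "f p = f q"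
    obtain z v where pz: "p = (z, v)" by (cases p)
    obtain z' v' where qz: "q = (z', v')" by (cases q)
    have e: "{z, v} = {z', v'}" using eq pz qz f_def by simp
    show "p = q" using p q e unfolding pz qz D1_def D2_def by (auto simp: doubleton_eq_iff)
  qed
  have img: "f ` (D1 \<union> D2) \<subseteq> comm_boundary G S"
  proof
    fix e assume "e \<in> f ` (D1 \<union> D2)"
    then obtain z v where zv: "(z, v) \<in> D1 \<union> D2" "e = {z, v}" unfolding f_def by auto
    have zZ: "z \<in> ?Z" using zv(1) unfolding D1_def D2_def by auto
    have vC: "v \<in> carrier G" using zv(1) SC unfolding D1_def D2_def by auto
    have zc: "z \<in> carrier G" and comm: "z \<otimes> v = v \<otimes> z"
      using zZ vC unfolding grp_center_def by auto
    have one: "(z \<in> S) \<noteq> (v \<in> S)" using zv(1) unfolding D1_def D2_def by auto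
    hence ne: "z \<noteq> v" by auto
    have "e \<in> commuting_edges G" unfolding commuting_edges_def using zv(2) zc vC ne comm by blast
    moreover have "card (e \<inter> S) = 1"
    proof (cases "z \<in> S")
      case True
      then have "e \<inter> S = {z}" using one zv(2) by auto
      thus ?thesis by simp
    next
      case False
      then have "e \<inter> S = {v}" using one zv(2) by auto
      thus ?thesis by simp
    qed
    ultimately show "e \<in> comm_boundary G S" unfolding comm_boundary_def by blast
  qed
  have finB: "finite (comm_boundary G S)"
  proof -
    have "comm_boundary G S \<subseteq> Pow (carrier G)"
      unfolding comm_boundary_def commuting_edges_def by auto
    thus ?thesis using fin finite_subset by blast
  qed
  have "card (D1 \<union> D2) \<le> card (comm_boundary G S)"
    using card_inj_on_le[OF inj img finB] .
  thus ?thesis using cD cD1 cD2 by simp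
qed

lemma arith_even:
  fixes a b s :: nat
  assumes "a + b \<le> s"
  shows "real (2*s) * real (a + b) / 4 \<le> real (a * (2*s - s) + b * (s - a))"
proof -
  have as: "a \<le> s" "b \<le> s" using assms by auto
  have h1: "real a * real b \<le> real s * real b" using as by (simp add: mult_right_mono)
  have h2: "real a * real b \<le> real a * real s" using as by (simp add: mult_left_mono)
  have "real (a * (2*s - s) + b * (s - a)) = real a * real s + real b * (real s - real a)"
    using as by (simp add: of_nat_diff)
  thus ?thesis using h1 h2 by (simp add: algebra_simps)
qed

lemma arith_odd:
  fixes a b s :: nat
  assumes "a + b \<le> s"
  shows "(real (2*s+1)^2 - 1) * real (a + b) / (4 * real (2*s+1))
          \<le> real (a * (2*s+1 - s) + b * (s - a))"
proof -
  have as: "a \<le> s" "b \<le> s" using assms by auto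
  have h1: "real a * real b * (real s + 1) \<le> real a * (real s + 1) * (real s + 1)"
    using as by (simp add: mult_right_mono mult_left_mono)
  have h2: "(real b * real s) * real a \<le> (real b * real s) * real s"
    using as by (intro mult_left_mono) auto
  have eq: "real (a * (2*s+1 - s) + b * (s - a)) = real a * (real s + 1) + real b * (real s - real a)"
  proof -
    have "2*s+1 - s = s + 1" by simp
    moreover have "real (s - a) = real s - real a" using as by (simp add: of_nat_diff)
    ultimately show ?thesis by (simp add: distrib_left)
  qed
  have key: "(real (2*s+1)^2 - 1) * real (a + b) \<le> 4 * real (2*s+1) * (real a * (real s + 1) + real b * (real s - real a))"
    using h1 h2 by (simp add: algebra_simps power2_eq_square)
  have pos: "0 < 4 * real (2*s+1)" by simp
  show ?thesis unfolding eq using key pos by (simp add: divide_le_eq mult.commute)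
qed

theorem corollary3p4:
  fixes G (structure)
  assumes "group G" and "finite (carrier G)" and "\<not> comm_group G"
    and "con_condition G"
  shows "(even (card (carrier G)) \<longrightarrow>
           real (comm_bw G) \<ge> real (card (carrier G)) * real (card (grp_center G)) / 4) \<and>
         (odd (card (carrier G)) \<longrightarrow>
           real (comm_bw G) \<ge> (real (card (carrier G))^2 - 1) * real (card (grp_center G))
                               / (4 * real (card (carrier G))))"
proof -
  let ?n = "card (carrier G)"
  let ?Z = "grp_center G"
  define X where "X = {card (comm_boundary G S) | S. S \<subset> carrier G \<and> card S = ?n div 2}"
  have npos: "0 < ?n" using assms(1,2) group.subgroup_self subgroup.one_closed
    by (metis card_gt_0_iff empty_iff)
  have finX: "finite X"
  proof -
    have "X \<subseteq> (\<lambda>S. card (comm_boundary G S)) ` Pow (carrier G)" unfolding X_def by auto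
    thus ?thesis using assms(2) finite_subset by blast
  qed
  have neX: "X \<noteq> {}"
  proof -
    obtain T where T: "T \<subseteq> carrier G" "card T = ?n div 2"
      using obtain_subset_with_card_n[of "?n div 2" "carrier G"] by auto
    have "T \<noteq> carrier G" using T npos by auto
    thus ?thesis using T unfolding X_def by blast
  qed
  have "comm_bw G \<in> X" unfolding comm_bw_def X_def[symmetric] using Min_in[OF finX neX] .
  then obtain S where S: "S \<subset> carrier G" "card S = ?n div 2" "comm_bw G = card (comm_boundary G S)"
    unfolding X_def by blast
  let ?a = "card (?Z \<inter> S)" and ?b = "card (?Z - S)" and ?s = "?n div 2"
  have bb: "?a * (?n - ?s) + ?b * (?s - ?a) \<le> comm_bw G"
    using boundary_bound[OF assms(1,2), of S] S by simp
  have Zsub: "?Z \<subseteq> carrier G" unfolding grp_center_def by auto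
  have finZ: "finite ?Z" using Zsub assms(2) finite_subset by blast
  have kab: "?a + ?b = card ?Z"
    using card_Un_disjoint[of "?Z \<inter> S" "?Z - S"] finZ
    by (metis Int_Diff_disjoint Un_Diff_Int card_Int_Diff finite_Int inf.commute) 
  have half: "2 * card ?Z \<le> ?n" using center_half[OF assms(1-3)] .
  show ?thesis
  proof (intro conjI impI)
    assume ev: "even ?n"
    then have n2: "?n = 2 * ?s" by simp
    have le: "?a + ?b \<le> ?s" using kab half n2 by linarith
    have "real (2 * ?s) * real (?a + ?b) / 4 \<le> real (?a * (2 * ?s - ?s) + ?b * (?s - ?a))"
      using arith_even[OF le] .
    also have "\<dots> \<le> real (comm_bw G)" using bb n2 by (metis of_nat_le_iff)
    finally show "real ?n * real (card ?Z) / 4 \<le> real (comm_bw G)" using n2 kab by simp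
  next
    assume od: "odd ?n"
    then have n2: "?n = 2 * ?s + 1" by presburger
    have le: "?a + ?b \<le> ?s" using kab half n2 by linarith
    have "(real (2 * ?s + 1)^2 - 1) * real (?a + ?b) / (4 * real (2 * ?s + 1))
          \<le> real (?a * (2 * ?s + 1 - ?s) + ?b * (?s - ?a))"
      using arith_odd[OF le] .
    also have "\<dots> \<le> real (comm_bw G)" using bb n2 by (metis of_nat_le_iff)
    finally have f: "(real (2 * ?s + 1)^2 - 1) * real (?a + ?b) / (4 * real (2 * ?s + 1)) \<le> real (comm_bw G)" .
    have e: "2 * ?s + 1 = ?n" using n2 by simp
    show "(real ?n ^ 2 - 1) * real (card ?Z) / (4 * real ?n) \<le> real (comm_bw G)"
      using f unfolding e kab .
  qed
qed

end
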